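(* Let $G=(X,Y;E)$ be a bipartite graph with $n$ vertices and let $M\subseteq E$ be a matching of $G$. Then $M$ is a perfect matching of $G$ that is uniquely restricted if and only if the $BD$-mapping digraph $D(G,M)$ is acyclic and has exactly $n/2$ vertices.
   Context: A matching $M$ is uniquely restricted if the subgraph of $G$ induced by the vertices saturated by $M$ has a unique perfect matching (namely $M$). For each edge of $M$ write it as $(x,x')$ with $x\in X$, $x'\in Y$; $x'$ is called the partner of $x$. The $BD$-mapping digraph $D(G,M)=(V,A)$ has vertex set $V=\{x\in X : (x,x')\in M \text{ for some } x'\}$ and arc set $A=\{\langle x_1,x_2\rangle : x_1,x_2\in V,\ (x_1,x_2')\in E\setminus M\}$, where $x_2'$ is the partner of $x_2$. $|D(G,M)|$ denotes the number of vertices of $D(G,M)$. *)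

theory Defs
  imports Main
begin

definition bipartite_graph :: "'a set \<Rightarrow> 'a set \<Rightarrow> ('a \<times> 'a) set \<Rightarrow> bool" where
  "bipartite_graph X Y E \<longleftrightarrow> finite X \<and> finite Y \<and> X \<inter> Y = {} \<and> E \<subseteq> X \<times> Y"

definition Vs :: "('a \<times> 'a) set \<Rightarrow> 'a set" where
  "Vs M = fst ` M \<union> snd ` M"

definition matching_of :: "('a \<times> 'a) set \<Rightarrow> ('a \<times> 'a) set \<Rightarrow> bool" where
  "matching_of E M \<longleftrightarrow> M \<subseteq> E \<and>
     (\<forall>e\<in>M. \<forall>f\<in>M. e \<noteq> f \<longrightarrow> fst e \<noteq> fst f \<and> snd e \<noteq> snd f)"

definition perfect_matching_of :: "'a set \<Rightarrow> ('a \<times> 'a) set \<Rightarrow> ('a \<times> 'a) set \<Rightarrow> bool" where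
  "perfect_matching_of W E M \<longleftrightarrow> matching_of E M \<and> Vs M = W"

definition uniquely_restricted :: "('a \<times> 'a) set \<Rightarrow> ('a \<times> 'a) set \<Rightarrow> bool" where
  "uniquely_restricted E M \<longleftrightarrow> matching_of E M \<and>
     (\<forall>M'. perfect_matching_of (Vs M) (E \<inter> (Vs M \<times> Vs M)) M' \<longrightarrow> M' = M)"

definition BD_vertices :: "'a set \<Rightarrow> ('a \<times> 'a) set \<Rightarrow> 'a set" where
  "BD_vertices X M = {x\<in>X. \<exists>y. (x,y) \<in> M}"

definition BD_arcs :: "'a set \<Rightarrow> ('a \<times> 'a) set \<Rightarrow> ('a \<times> 'a) set \<Rightarrow> ('a \<times> 'a) set" where
  "BD_arcs X E M = {(x1,x2). x1 \<in> BD_vertices X M \<and> x2 \<in> BD_vertices X M \<and>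
      (\<exists>y. (x2,y) \<in> M \<and> (x1,y) \<in> E - M)}"

end

theory Submission
  imports Defs
begin

lemma card_part:
  assumes "bipartite_graph X Y E" and "matching_of E M"
  shows "perfect_matching_of (X \<union> Y) E M \<longleftrightarrow> 2 * card (BD_vertices X M) = card (X \<union> Y)"
proof -
  have MXY: "M \<subseteq> X \<times> Y" using assms unfolding bipartite_graph_def matching_of_def by blast
  have fin: "finite M" using MXY assms(1) unfolding bipartite_graph_def
    by (meson finite_SigmaI finite_subset)
  have BD: "BD_vertices X M = fst ` M" using MXY unfolding BD_vertices_def by force
  have inj1: "inj_on fst M" and inj2: "inj_on snd M"
    using assms(2) unfolding matching_of_def inj_on_def by blast+
  have disj: "fst ` M \<inter> snd ` M = {}" using MXY assms(1) unfolding bipartite_graph_def by force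
  have cVs: "card (Vs M) = 2 * card M"
    unfolding Vs_def using card_Un_disjoint[OF finite_imageI[OF fin] finite_imageI[OF fin] disj]
      card_image[OF inj1] card_image[OF inj2] by simp
  have sub: "Vs M \<subseteq> X \<union> Y" using MXY unfolding Vs_def by force
  have finXY: "finite (X \<union> Y)" using assms(1) unfolding bipartite_graph_def by blast
  show ?thesis
    unfolding perfect_matching_of_def BD using assms(2) cVs card_image[OF inj1]
    by (metis card_subset_eq finXY sub)
qed

lemma acyc_unique:
  assumes "bipartite_graph X Y E" and "matching_of E M"
    and ac: "acyclic (BD_arcs X E M)"
    and pm: "perfect_matching_of (Vs M) (E \<inter> (Vs M \<times> Vs M)) M'"
  shows "M' = M"
proof -
  have MXY: "M \<subseteq> X \<times> Y" using assms unfolding bipartite_graph_def matching_of_def by blast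
  have XY: "X \<inter> Y = {}" using assms(1) unfolding bipartite_graph_def by blast
  have mM: "\<And>a b c d. (a,b)\<in>M \<Longrightarrow> (c,d)\<in>M \<Longrightarrow> (a = c \<or> b = d) \<Longrightarrow> a = c \<and> b = d"
    using assms(2) unfolding matching_of_def by fastforce
  have mM': "\<And>a b c d. (a,b)\<in>M' \<Longrightarrow> (c,d)\<in>M' \<Longrightarrow> (a = c \<or> b = d) \<Longrightarrow> a = c \<and> b = d"
    using pm unfolding perfect_matching_of_def matching_of_def by fastforce
  have M'E: "M' \<subseteq> E \<inter> (Vs M \<times> Vs M)" and VsM': "Vs M' = Vs M"
    using pm unfolding perfect_matching_of_def matching_of_def by auto
  have EXY: "E \<subseteq> X \<times> Y" using assms(1) unfolding bipartite_graph_def by blast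
  have M'XY: "M' \<subseteq> X \<times> Y" using M'E EXY by blast
  have VX: "\<And>x. x \<in> Vs M \<Longrightarrow> x \<in> X \<Longrightarrow> \<exists>y. (x,y)\<in>M"
    using MXY XY unfolding Vs_def by force
  have VY: "\<And>y. y \<in> Vs M \<Longrightarrow> y \<in> Y \<Longrightarrow> \<exists>x. (x,y)\<in>M"
    using MXY XY unfolding Vs_def by force
  have VX': "\<And>x. x \<in> Vs M \<Longrightarrow> x \<in> X \<Longrightarrow> \<exists>y. (x,y)\<in>M'"
  proof -
    fix x assume "x \<in> Vs M" "x \<in> X"
    then have "x \<in> fst ` M' \<union> snd ` M'" using VsM' unfolding Vs_def by simp
    moreover have "x \<notin> snd ` M'" using M'XY XY \<open>x \<in> X\<close> by force
    ultimately have "x \<in> fst ` M'" by blast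
    then show "\<exists>y. (x,y)\<in>M'" by force
  qed
  define S where "S = {x. \<exists>y. (x,y)\<in>M' \<and> (x,y)\<notin>M}"
  have succ: "\<exists>x2\<in>S. (x, x2) \<in> BD_arcs X E M" if xS: "x \<in> S" for x
  proof -
    obtain y where xy: "(x,y)\<in>M'" "(x,y)\<notin>M" using xS S_def by blast
    have xV: "x \<in> Vs M" "y \<in> Vs M" "x \<in> X" "y \<in> Y" "(x,y) \<in> E" using xy M'E M'XY by auto
    obtain x2 where x2: "(x2,y)\<in>M" using VY xV by blast
    obtain y1 where y1: "(x,y1)\<in>M" using VX xV by blast
    have x2V: "x2 \<in> Vs M" "x2 \<in> X" using x2 MXY unfolding Vs_def by force+
    obtain y2 where y2: "(x2,y2)\<in>M'" using VX' x2V by blast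
    have "(x2,y2) \<notin> M"
    proof
      assume "(x2,y2)\<in>M"
      then have "y2 = y" using mM x2 by blast
      then have "x2 = x" using mM' y2 xy by blast
      then show False using x2 xy by simp
    qed
    then have "x2 \<in> S" using y2 S_def by blast
    moreover have "(x,x2) \<in> BD_arcs X E M"
      unfolding BD_arcs_def BD_vertices_def using xV x2V x2 y1 xy by blast
    ultimately show ?thesis by blast
  qed
  have finR: "finite (BD_arcs X E M)"
  proof -
    have "BD_arcs X E M \<subseteq> X \<times> X" unfolding BD_arcs_def BD_vertices_def by blast
    moreover have "finite X" using assms(1) unfolding bipartite_graph_def by blast
    ultimately show ?thesis by (meson finite_SigmaI finite_subset)
  qed
  have wf: "wf ((BD_arcs X E M)\<inverse>)" using finite_acyclic_wf_converse[OF finR ac] .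
  have Se: "S = {}"
  proof (rule ccontr)
    assume "S \<noteq> {}"
    then obtain x where "x \<in> S" by blast
    then obtain z where z: "z \<in> S" "\<And>y. (y,z) \<in> (BD_arcs X E M)\<inverse> \<Longrightarrow> y \<notin> S"
      using wfE_min[OF wf] by blast
    then show False using succ[OF z(1)] by blast
  qed
  have sub: "M' \<subseteq> M" using Se S_def by auto
  have "M \<subseteq> M'"
  proof
    fix p assume p: "p \<in> M"
    obtain a b where ab: "p = (a,b)" by fastforce
    have "a \<in> Vs M" "a \<in> X" using p ab MXY unfolding Vs_def by force+
    then obtain b' where "(a,b')\<in>M'" using VX' by blast
    moreover then have "b' = b" using sub mM p ab by blast
    ultimately show "p \<in> M'" using ab by simp
  qed
  then show ?thesis using sub by blast
qed

lemma path_seg: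
  fixes f :: "nat \<Rightarrow> 'a" and R :: "('a \<times> 'a) set"
  assumes "\<forall>i<n. (f i, f (Suc i)) \<in> R" and "i \<le> j" and "j \<le> n"
  shows "(f i, f j) \<in> R ^^ (j - i)"
proof -
  have "\<forall>k<j-i. ((\<lambda>k. f (i+k)) k, (\<lambda>k. f (i+k)) (Suc k)) \<in> R"
    using assms by auto
  moreover have "(\<lambda>k. f (i+k)) 0 = f i" "(\<lambda>k. f (i+k)) (j-i) = f j" using assms(2) by auto
  ultimately show ?thesis unfolding relpow_fun_conv by (intro exI[of _ "\<lambda>k. f (i+k)"]) simp
qed

lemma cyc_nonunique:
  assumes bg: "bipartite_graph X Y E" and mt: "matching_of E M"
    and nac: "\<not> acyclic (BD_arcs X E M)"
  shows "\<exists>M'. perfect_matching_of (Vs M) (E \<inter> (Vs M \<times> Vs M)) M' \<and> M' \<noteq> M"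
proof -
  define R where "R = BD_arcs X E M"
  have MXY: "M \<subseteq> X \<times> Y" using assms unfolding bipartite_graph_def matching_of_def by blast
  have ME: "M \<subseteq> E" using mt unfolding matching_of_def by blast
  have mM: "\<And>a b c d. (a,b)\<in>M \<Longrightarrow> (c,d)\<in>M \<Longrightarrow> (a = c \<or> b = d) \<Longrightarrow> a = c \<and> b = d"
    using mt unfolding matching_of_def by fastforce
  have arc: "\<exists>y. (x2,y)\<in>M \<and> (x1,y)\<in>E \<and> (x1,y) \<notin> M \<and> x1 \<in> fst ` M" if "(x1,x2)\<in>R" for x1 x2
    using that unfolding R_def BD_arcs_def BD_vertices_def by force
  have "\<exists>x n. n > 0 \<and> (x,x) \<in> R ^^ n"
    using nac unfolding acyclic_def R_def trancl_power by blast
  define P where "P = (\<lambda>n. n > 0 \<and> (\<exists>x. (x,x) \<in> R ^^ n))"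
  define n where "n = (LEAST n. P n)"
  have Pn: "P n" unfolding n_def using \<open>\<exists>x n. n > 0 \<and> (x,x) \<in> R ^^ n\<close> P_def
    by (metis LeastI)
  have minn: "\<And>m. P m \<Longrightarrow> n \<le> m" unfolding n_def by (simp add: Least_le)
  obtain x where n0: "n > 0" and xx: "(x,x) \<in> R ^^ n" using Pn P_def by blast
  obtain f where f0: "f 0 = x" and fn: "f n = x" and fR: "\<forall>i<n. (f i, f (Suc i)) \<in> R"
    using xx relpow_fun_conv by metis
  have dist: "f i \<noteq> f j" if "i < j" "j \<le> n" "j - i < n" for i j
  proof
    assume "f i = f j"
    then have "(f i, f i) \<in> R ^^ (j - i)" using path_seg[OF fR, of i j] that by simp
    then have "P (j - i)" unfolding P_def using that by auto
    then show False using minn that by fastforce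
  qed
  define C where "C = f ` {..<n}"
  have fnC: "f n \<in> C" using fn f0 n0 C_def by (metis image_eqI lessThan_iff)
  have fSC: "f (Suc i) \<in> C" if "i < n" for i
    using that fnC C_def by (cases "Suc i = n") auto
  define M' where "M' = {(a,b). (a,b)\<in>M \<and> a \<notin> C} \<union> {(f i, b) | i b. i < n \<and> (f (Suc i), b) \<in> M}"
  have cycedge: "(f i, b) \<in> E \<and> (f i, b) \<notin> M \<and> f i \<in> fst ` M \<and> b \<in> snd ` M"
    if ib: "i < n" "(f (Suc i), b) \<in> M" for i b
  proof -
    obtain y where y: "(f (Suc i),y)\<in>M" "(f i,y)\<in>E" "(f i,y) \<notin> M" "f i \<in> fst ` M"
      using arc fR ib(1) by blast
    have "y = b" using mM y(1) ib(2) by blast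
    then show ?thesis using y ib(2) by force
  qed
  have VsI: "a \<in> Vs M \<and> b \<in> Vs M" if "(a,b) \<in> M" for a b
    using that unfolding Vs_def by force
  have partner: "\<exists>b. (f (Suc i), b) \<in> M" if "i < n" for i
    using arc[OF fR[rule_format, OF that]] by blast
  have sub1: "M' \<subseteq> E \<inter> (Vs M \<times> Vs M)"
  proof
    fix p assume "p \<in> M'"
    then have "p \<in> M \<or> (\<exists>i b. p = (f i,b) \<and> i<n \<and> (f (Suc i),b)\<in>M)"
      unfolding M'_def by blast
    then show "p \<in> E \<inter> (Vs M \<times> Vs M)"
    proof
      assume "p \<in> M"
      then show ?thesis using ME VsI by (metis IntI mem_Sigma_iff prod.collapse subsetD)
    next
      assume "\<exists>i b. p = (f i,b) \<and> i<n \<and> (f (Suc i),b)\<in>M"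
      then obtain i b where "p = (f i,b)" "i<n" "(f (Suc i),b)\<in>M" by blast
      then show ?thesis using cycedge[of i b] unfolding Vs_def by blast
    qed
  qed
  have matching: "matching_of (E \<inter> (Vs M \<times> Vs M)) M'"
    unfolding matching_of_def
  proof (intro conjI[OF sub1] ballI impI)
    fix e g assume e: "e \<in> M'" and g: "g \<in> M'" and ne: "e \<noteq> g"
    show "fst e \<noteq> fst g \<and> snd e \<noteq> snd g"
    proof (cases "e \<in> {(a,b). (a,b)\<in>M \<and> a \<notin> C}")
      case e1: True
      show ?thesis
      proof (cases "g \<in> {(a,b). (a,b)\<in>M \<and> a \<notin> C}")
        case True
        then show ?thesis using e1 ne mt unfolding matching_of_def by blast
      next
        case False
        then obtain j b where g2: "g = (f j, b)" "j < n" "(f (Suc j), b) \<in> M" using g M'_def by blast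
        have "fst e \<noteq> fst g" using e1 g2 C_def by auto
        moreover have "snd e \<noteq> snd g"
        proof
          assume "snd e = snd g"
          then have "fst e = f (Suc j)" using e1 g2 mM by (metis (mono_tags, lifting) case_prodE mem_Collect_eq prod.sel)
          then show False using e1 fSC[OF g2(2)] by auto
        qed
        ultimately show ?thesis by blast
      qed
    next
      case False
      then obtain i b where e2: "e = (f i, b)" "i < n" "(f (Suc i), b) \<in> M" using e M'_def by blast
      show ?thesis
      proof (cases "g \<in> {(a,b). (a,b)\<in>M \<and> a \<notin> C}")
        case g1: True
        have "fst e \<noteq> fst g" using g1 e2 C_def by auto
        moreover have "snd e \<noteq> snd g"
        proof
          assume "snd e = snd g"
          then have "fst g = f (Suc i)" using g1 e2 mM by (metis (mono_tags, lifting) case_prodE mem_Collect_eq prod.sel)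
          then show False using g1 fSC[OF e2(2)] by auto
        qed
        ultimately show ?thesis by blast
      next
        case False
        then obtain j b' where g2: "g = (f j, b')" "j < n" "(f (Suc j), b') \<in> M" using g M'_def by blast
        show ?thesis
        proof (cases "i = j")
          case True
          then have "b = b'" using mM e2 g2 by blast
          then show ?thesis using True e2 g2 ne by simp
        next
          case False
          have d1: "f i \<noteq> f j"
          proof (cases "i < j")
            case True
            moreover have "j - i < n" using g2(2) by arith
            ultimately show ?thesis using dist[of i j] g2(2) by auto
          next
            case F: False
            then have "j < i" using False by simp
            moreover have "i - j < n" using e2(2) by arith
            ultimately show ?thesis using dist[of j i] e2(2) by auto
          qed
          have d2: "f (Suc i) \<noteq> f (Suc j)"
          proof -
            have "Suc i \<le> n" "Suc j \<le> n" using e2 g2 by auto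
            show ?thesis
            proof (cases "i < j")
              case True
              then show ?thesis using dist[of "Suc i" "Suc j"] \<open>Suc j \<le> n\<close> g2(2) by simp
            next
              case False
              then have "j < i" using \<open>i \<noteq> j\<close> by simp
              moreover have "i - j < n" using e2(2) by arith
              ultimately show ?thesis using dist[of "Suc j" "Suc i"] \<open>Suc i \<le> n\<close> e2(2) by auto
            qed
          qed
          have "b \<noteq> b'" using d2 mM e2 g2 by blast
          then show ?thesis using d1 e2 g2 by simp
        qed
      qed
    qed
  qed
  have VsEq: "Vs M' = Vs M"
  proof
    show "Vs M' \<subseteq> Vs M"
    proof
      fix v assume "v \<in> Vs M'"
      then obtain p where "p \<in> M'" "v = fst p \<or> v = snd p" unfolding Vs_def by blast
      then show "v \<in> Vs M" using sub1 by (metis IntD2 mem_Sigma_iff prod.collapse subsetD)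
    qed
  next
    show "Vs M \<subseteq> Vs M'"
    proof
      fix v assume "v \<in> Vs M"
      then obtain a b where ab: "(a,b) \<in> M" "v = a \<or> v = b" unfolding Vs_def by fastforce
      show "v \<in> Vs M'"
      proof (cases "a \<in> C")
        case False
        then have "(a,b) \<in> M'" using ab M'_def by blast
        then show ?thesis using ab unfolding Vs_def by (metis UnI1 UnI2 fst_conv snd_conv image_eqI)
      next
        case True
        then obtain k where k: "k < n" "a = f k" using C_def by blast
        obtain b1 where b1: "(f (Suc k), b1) \<in> M" using partner k by blast
        have e1: "(a, b1) \<in> M'" using k b1 M'_def by blast
        define i where "i = (if k = 0 then n - 1 else k - 1)"
        have i: "i < n \<and> f (Suc i) = a"
        proof (cases "k = 0")
          case True
          then show ?thesis using k n0 fn f0 i_def by auto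
        next
          case False
          then show ?thesis using k i_def by auto
        qed
        have e2: "(f i, b) \<in> M'" using conjunct1[OF i] conjunct2[OF i] ab(1) unfolding M'_def by blast
        show ?thesis using ab(2) e1 e2 unfolding Vs_def by (metis UnI1 UnI2 fst_conv snd_conv image_eqI)
      qed
    qed
  qed
  obtain b0 where b0: "(f (Suc 0), b0) \<in> M" using partner n0 by blast
  have "(f 0, b0) \<in> M'" using b0 n0 M'_def by blast
  moreover have "(f 0, b0) \<notin> M" using cycedge n0 b0 by blast
  ultimately have "M' \<noteq> M" by blast
  then show ?thesis using matching VsEq unfolding perfect_matching_of_def by blast
qed

theorem theorem7:
  fixes X Y :: "'a set" and E M :: "('a \<times> 'a) set"
  assumes "bipartite_graph X Y E"
    and "matching_of E M"
  shows "(perfect_matching_of (X \<union> Y) E M \<and> uniquely_restricted E M) \<longleftrightarrow>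
         (acyclic (BD_arcs X E M) \<and> 2 * card (BD_vertices X M) = card (X \<union> Y))"
proof -
  have "uniquely_restricted E M \<longleftrightarrow> acyclic (BD_arcs X E M)"
  proof
    assume "uniquely_restricted E M"
    then show "acyclic (BD_arcs X E M)"
      using cyc_nonunique[OF assms] unfolding uniquely_restricted_def by blast
  next
    assume "acyclic (BD_arcs X E M)"
    then show "uniquely_restricted E M"
      using acyc_unique[OF assms] assms(2) unfolding uniquely_restricted_def by blast
  qed
  then show ?thesis using card_part[OF assms] by blast
qed

end
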